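(* Let $1\le p\le n$, $\beta>0$, and $X\in\mathbb{R}^{n\times p}_*$. Let $\mathrm{T}_X\mathrm{St}_{X^\top X}=\{\xi\in\mathbb{R}^{n\times p}\mid \xi^\top X+X^\top\xi=0\}$ be the tangent space at $X$ of $\mathrm{St}_{X^\top X}=\{Y\in\mathbb{R}^{n\times p}\mid Y^\top Y=X^\top X\}$. The orthogonal projection $\mathrm{Proj}_{X,\beta}:\mathbb{R}^{n\times p}\to\mathrm{T}_X\mathrm{St}_{X^\top X}$ with respect to $g^\beta_X$ (i.e., the map characterized by $\mathrm{Proj}_{X,\beta}(Z)\in\mathrm{T}_X\mathrm{St}_{X^\top X}$ and $g^\beta_X(\xi,Z-\mathrm{Proj}_{X,\beta}(Z))=0$ for all $\xi\in\mathrm{T}_X\mathrm{St}_{X^\top X}$) is given, for all $Z\in\mathbb{R}^{n\times p}$, by \[\mathrm{Proj}_{X,\beta}(Z)=X(X^\top X)^{-1}\operatorname{skew}(X^\top Z)+\big(\mathrm{I}_n-X(X^\top X)^{-1}X^\top\big)Z.\]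
   Context: $\mathbb{R}^{n\times p}_*$ denotes the set of full-rank (rank $p$) real $n\times p$ matrices, and $\operatorname{skew}(A)=(A-A^\top)/2$. For $\beta>0$ and $X\in\mathbb{R}^{n\times p}_*$, the $\beta$-metric is the inner product on $\mathbb{R}^{n\times p}$ given by \[g^\beta_X(\xi,\zeta)=\mathrm{trace}\Big(\xi^\top\big(\mathrm{I}_n-(1-\beta)X(X^\top X)^{-1}X^\top\big)\zeta\,(X^\top X)^{-1}\Big),\qquad \xi,\zeta\in\mathbb{R}^{n\times p}.\] *)

theory Defs
  imports "HOL-Analysis.Analysis"
begin

text \<open>n x p real matrices are represented as real^'p^'n (rows indexed by 'n, columns by 'p).\<close>

definition skew :: "real^'p^'p \<Rightarrow> real^'p^'p" where
  "skew A = (1/2) *\<^sub>R (A - transpose A)"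

definition beta_metric :: "real \<Rightarrow> real^'p^'n \<Rightarrow> real^'p^'n \<Rightarrow> real^'p^'n \<Rightarrow> real" where
  "beta_metric \<beta> X \<xi> \<zeta> =
     trace (transpose \<xi> ** (mat 1 - (1 - \<beta>) *\<^sub>R (X ** matrix_inv (transpose X ** X) ** transpose X))
            ** \<zeta> ** matrix_inv (transpose X ** X))"

definition tangent_St :: "real^'p^'n \<Rightarrow> (real^'p^'n) set" where
  "tangent_St X = {\<xi>. transpose \<xi> ** X + transpose X ** \<xi> = 0}"

definition proj_formula :: "real^'p^'n \<Rightarrow> real^'p^'n \<Rightarrow> real^'p^'n" where
  "proj_formula X Z =
     X ** matrix_inv (transpose X ** X) ** skew (transpose X ** Z)
     + (mat 1 - X ** matrix_inv (transpose X ** X) ** transpose X) ** Z"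

end

theory Submission
  imports Defs
begin

lemma mm_radd: "((A::real^'m^'n) + B) ** C = A ** C + B ** C"
  by (simp add: matrix_matrix_mult_def vec_eq_iff distrib_right sum.distrib)

lemma mm_ldiff: "(A::real^'m^'n) ** (B - C) = A ** B - A ** C"
  by (simp add: matrix_matrix_mult_def vec_eq_iff right_diff_distrib sum_subtractf)

lemma mm_rdiff: "((A::real^'m^'n) - B) ** C = A ** C - B ** C"
  by (simp add: matrix_matrix_mult_def vec_eq_iff left_diff_distrib sum_subtractf)

lemma mm_sl: "(k *\<^sub>R (A::real^'m^'n)) ** B = k *\<^sub>R (A ** B)"
  by (simp add: scalar_matrix_assoc)

lemma mm_sr: "(A::real^'m^'n) ** (k *\<^sub>R B) = k *\<^sub>R (A ** B)"
  by (simp add: matrix_matrix_mult_def vec_eq_iff sum_distrib_left mult_ac)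

lemma tr_add: "transpose ((A::real^'m^'n) + B) = transpose A + transpose B"
  by (simp add: transpose_def vec_eq_iff)

lemma tr_diff: "transpose ((A::real^'m^'n) - B) = transpose A - transpose B"
  by (simp add: transpose_def vec_eq_iff)

lemma tr_minus: "transpose (- (A::real^'m^'n)) = - transpose A"
  by (simp add: transpose_def vec_eq_iff)

lemma tr_zero: "transpose (0::real^'m^'n) = 0"
  by (simp add: transpose_def vec_eq_iff)

lemma trace_transpose': "trace (transpose (A::real^'n^'n)) = trace A"
  by (simp add: trace_def transpose_def)

lemma trace_scaleR': "trace (k *\<^sub>R (A::real^'n^'n)) = k * trace A"
  by (simp add: trace_def sum_distrib_left)

lemma trace_skew_sym:
  fixes A B :: "real^'n^'n"
  assumes "transpose A = - A" "transpose B = B"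
  shows "trace (A ** B) = 0"
proof -
  have "trace (A ** B) = trace (transpose (A ** B))" by (rule trace_transpose'[symmetric])
  also have "\<dots> = trace (B ** (- A))" by (simp only: matrix_transpose_mul assms)
  also have "\<dots> = - trace (B ** A)"
    by (simp add: matrix_matrix_mult_def trace_def sum_negf)
  also have "\<dots> = - trace (A ** B)" using trace_mul_sym[of B A] by simp
  finally show ?thesis by simp
qed

lemma trace_gram:
  fixes V :: "real^'n^'m"
  shows "trace (transpose V ** V) = (\<Sum>i\<in>UNIV. \<Sum>k\<in>UNIV. (V$k$i)^2)"
  by (simp add: trace_def matrix_matrix_mult_def transpose_def power2_eq_square)

lemma trace_gram_nonneg: "trace (transpose (V::real^'n^'m) ** V) \<ge> 0"
  unfolding trace_gram by (intro sum_nonneg) auto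

lemma trace_gram_zero:
  assumes "trace (transpose (V::real^'n^'m) ** V) = 0"
  shows "V = 0"
proof -
  have s: "(\<Sum>i\<in>UNIV. \<Sum>k\<in>UNIV. (V$k$i)^2) = 0"
    using assms unfolding trace_gram .
  have "\<forall>i\<in>UNIV. (\<Sum>k\<in>UNIV. (V$k$i)^2) = 0"
    using iffD1[OF sum_nonneg_eq_0_iff s] by (simp add: sum_nonneg)
  then have "\<forall>i k. (V$k$i)^2 = 0"
  proof (intro allI)
    fix i k
    have "(\<Sum>k\<in>UNIV. (V$k$i)^2) = 0" using \<open>\<forall>i\<in>UNIV. _\<close> by simp
    then show "(V$k$i)^2 = 0" using sum_nonneg_eq_0_iff[of UNIV "\<lambda>k. (V$k$i)^2"] by simp
  qed
  then have "\<forall>i k. V$k$i = 0" by simp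
  then have "\<forall>k. V$k = 0"
    by (subst vec_eq_iff) simp
  then show ?thesis by (subst vec_eq_iff) simp
qed

lemma gram_invertible:
  fixes X :: "real^'p^'n"
  assumes "rank X = CARD('p)"
  shows "invertible (transpose X ** X)"
proof -
  have inj: "inj ((*v) X)" using assms full_rank_injective by blast
  have "\<forall>v. (transpose X ** X) *v v = 0 \<longrightarrow> v = 0"
  proof (intro allI impI)
    fix v :: "real^'p"
    assume h: "(transpose X ** X) *v v = 0"
    have "inner (X *v v) (X *v v) = inner (v v* transpose X) (X *v v)" by simp
    also have "\<dots> = inner v (transpose X *v (X *v v))" by (rule dot_lmul_matrix)
    also have "\<dots> = inner v ((transpose X ** X) *v v)" by (simp add: matrix_vector_mul_assoc)
    also have "\<dots> = 0" using h by simp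
    finally have "X *v v = 0" by simp
    then have "X *v v = X *v 0" by simp
    then show "v = 0" using inj by (meson injD)
  qed
  then have "\<exists>B. B ** (transpose X ** X) = mat 1" using matrix_left_invertible_ker by blast
  then show ?thesis using invertible_left_inverse by blast
qed

lemma matrix_inv_props:
  fixes G :: "real^'p^'p"
  assumes "invertible G"
  shows "G ** matrix_inv G = mat 1 \<and> matrix_inv G ** G = mat 1"
  unfolding matrix_inv_def
  by (rule someI_ex) (use assms in \<open>simp add: invertible_def\<close>)

lemma tr_skew: "transpose (skew A) = - skew (A::real^'p^'p)"
  by (simp add: skew_def vec_eq_iff transpose_def algebra_simps)

theorem proposition4:
  fixes X :: "real^'p^'n" and \<beta> :: real
  assumes "CARD('p) \<le> CARD('n)"
    and "\<beta> > 0"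
    and "rank X = CARD('p)"
  shows "(\<forall>Z. proj_formula X Z \<in> tangent_St X \<and>
              (\<forall>\<xi>\<in>tangent_St X. beta_metric \<beta> X \<xi> (Z - proj_formula X Z) = 0))
       \<and> (\<forall>P. (\<forall>Z. P Z \<in> tangent_St X \<and>
                   (\<forall>\<xi>\<in>tangent_St X. beta_metric \<beta> X \<xi> (Z - P Z) = 0))
             \<longrightarrow> (\<forall>Z. P Z = proj_formula X Z))"
proof -
  define Gi where "Gi = matrix_inv (transpose X ** X)"
  define Q where "Q = X ** Gi ** transpose X"
  have GGi: "transpose X ** X ** Gi = mat 1" and GiG: "Gi ** (transpose X ** X) = mat 1"
    using matrix_inv_props[OF gram_invertible[OF assms(3)]] unfolding Gi_def by auto
  have GiG': "A ** Gi ** transpose X ** X = A" for A :: "real^'p^'m"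
    by (simp add: matrix_mul_assoc[symmetric] GiG)
  have tGi: "transpose Gi = Gi"
  proof -
    have "transpose Gi = transpose Gi ** (transpose X ** X ** Gi)" by (simp add: GGi)
    also have "\<dots> = transpose (transpose X ** X ** Gi) ** Gi"
      by (simp add: matrix_transpose_mul matrix_mul_assoc)
    also have "\<dots> = Gi" by (simp add: GGi)
    finally show ?thesis .
  qed
  have XtQ: "transpose X ** Q = transpose X"
    unfolding Q_def by (simp add: matrix_mul_assoc GGi)
  have QX: "Q ** X = X"
    unfolding Q_def by (simp add: GiG')
  have tQ: "transpose Q = Q"
    unfolding Q_def by (simp add: matrix_transpose_mul matrix_mul_assoc tGi)
  have QQ: "Q ** Q = Q"
  proof -
    have "Q ** Q = Q ** X ** Gi ** transpose X" unfolding Q_def by (simp add: matrix_mul_assoc)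
    also have "\<dots> = Q" using QX unfolding Q_def by simp
    finally show ?thesis .
  qed
  have tIQ: "transpose (mat 1 - Q) = mat 1 - Q" by (simp add: tr_diff tQ)
  have IQQ: "(mat 1 - Q) ** (mat 1 - Q) = mat 1 - Q"
    by (simp add: mm_ldiff mm_rdiff QQ)
  have bmE: "beta_metric \<beta> X \<xi> \<zeta> = trace (transpose \<xi> ** (mat 1 - (1 - \<beta>) *\<^sub>R Q) ** \<zeta> ** Gi)"
    for \<xi> \<zeta> unfolding beta_metric_def Gi_def[symmetric] Q_def[symmetric] ..
  have pfE: "proj_formula X Z = X ** Gi ** skew (transpose X ** Z) + (mat 1 - Q) ** Z" for Z
    unfolding proj_formula_def Gi_def[symmetric] Q_def[symmetric] ..
  have part1: "proj_formula X Z \<in> tangent_St X \<and>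
              (\<forall>\<xi>\<in>tangent_St X. beta_metric \<beta> X \<xi> (Z - proj_formula X Z) = 0)" for Z
  proof -
    define S where "S = skew (transpose X ** Z)"
    define P where "P = proj_formula X Z"
    have P: "P = X ** Gi ** S + (mat 1 - Q) ** Z" unfolding P_def S_def pfE ..
    have XtP: "transpose X ** P = S"
    proof -
      have "transpose X ** (X ** Gi ** S) = S" by (simp add: matrix_mul_assoc GGi)
      moreover have "transpose X ** ((mat 1 - Q) ** Z) = 0"
        by (simp add: matrix_mul_assoc mm_ldiff XtQ)
      ultimately show ?thesis unfolding P by (simp add: matrix_add_ldistrib)
    qed
    have tS: "transpose S = - S" unfolding S_def by (rule tr_skew)
    have tan: "P \<in> tangent_St X"
    proof -
      have "transpose P ** X = transpose (transpose X ** P)" by (simp add: matrix_transpose_mul)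
      then have "transpose P ** X = - S" using XtP tS by simp
      then show ?thesis unfolding tangent_St_def using XtP by simp
    qed
    define M where "M = transpose X ** Z - S"
    have ZP: "Z - P = X ** Gi ** M"
    proof -
      have "Z - P = Q ** Z - X ** Gi ** S" unfolding P by (simp add: mm_rdiff)
      also have "Q ** Z = X ** Gi ** (transpose X ** Z)" unfolding Q_def by (simp add: matrix_mul_assoc)
      finally show ?thesis unfolding M_def by (simp add: mm_ldiff)
    qed
    have tM: "transpose M = M"
      unfolding M_def S_def skew_def
      by (simp add: vec_eq_iff transpose_def matrix_matrix_mult_def algebra_simps mult.commute)
    have WZP: "(mat 1 - (1 - \<beta>) *\<^sub>R Q) ** (Z - P) = \<beta> *\<^sub>R (X ** Gi ** M)"
    proof -
      have "Q ** (X ** Gi ** M) = X ** Gi ** M" by (simp add: matrix_mul_assoc QX)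
      then have "(mat 1 - (1 - \<beta>) *\<^sub>R Q) ** (X ** Gi ** M) = X ** Gi ** M - (1 - \<beta>) *\<^sub>R (X ** Gi ** M)"
        by (simp add: mm_rdiff mm_sl)
      also have "\<dots> = \<beta> *\<^sub>R (X ** Gi ** M)" by (simp add: algebra_simps)
      finally show ?thesis using ZP by simp
    qed
    have orth: "beta_metric \<beta> X \<xi> (Z - P) = 0" if "\<xi> \<in> tangent_St X" for \<xi>
    proof -
      have tx: "transpose \<xi> ** X + transpose X ** \<xi> = 0" using that unfolding tangent_St_def by simp
      define A where "A = transpose \<xi> ** X"
      define B where "B = Gi ** M ** Gi"
      have tA: "transpose A = - A" unfolding A_def using tx
        by (simp add: matrix_transpose_mul eq_neg_iff_add_eq_0 add.commute)
      have tB: "transpose B = B" unfolding B_def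
        by (simp add: matrix_transpose_mul tGi tM matrix_mul_assoc)
      have "beta_metric \<beta> X \<xi> (Z - P) = trace (transpose \<xi> ** ((mat 1 - (1 - \<beta>) *\<^sub>R Q) ** (Z - P)) ** Gi)"
        unfolding bmE by (simp add: matrix_mul_assoc)
      also have "\<dots> = \<beta> * trace (A ** B)"
        unfolding WZP A_def B_def by (simp add: mm_sl mm_sr trace_scaleR' matrix_mul_assoc)
      also have "\<dots> = 0" using trace_skew_sym[OF tA tB] by simp
      finally show ?thesis .
    qed
    show ?thesis using tan orth unfolding P_def by blast
  qed
  have tanD: "a - b \<in> tangent_St X" if "a \<in> tangent_St X" "b \<in> tangent_St X" for a b
  proof -
    have "transpose (a - b) ** X + transpose X ** (a - b)
        = (transpose a ** X + transpose X ** a) - (transpose b ** X + transpose X ** b)"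
      by (simp add: tr_diff mm_rdiff mm_ldiff algebra_simps)
    then show ?thesis using that unfolding tangent_St_def by simp
  qed
  have bm_diff: "beta_metric \<beta> X \<xi> (a - b) = beta_metric \<beta> X \<xi> a - beta_metric \<beta> X \<xi> b"
    for \<xi> a b unfolding bmE by (simp add: mm_ldiff mm_rdiff trace_sub)
  have key: "trace (transpose Y ** Y ** Gi) \<ge> 0 \<and> (trace (transpose Y ** Y ** Gi) = 0 \<longrightarrow> Y = 0)"
    for Y :: "real^'p^'n"
  proof -
    define V where "V = Y ** Gi ** transpose X"
    have "trace (transpose V ** V) = trace (X ** (Gi ** transpose Y ** Y ** Gi ** transpose X))"
      unfolding V_def by (simp add: matrix_transpose_mul tGi matrix_mul_assoc)
    also have "\<dots> = trace (Gi ** transpose Y ** Y ** Gi ** transpose X ** X)"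
      by (simp add: trace_mul_sym[of X])
    also have "\<dots> = trace (Gi ** (transpose Y ** Y))" by (simp add: GiG' matrix_mul_assoc)
    also have "\<dots> = trace (transpose Y ** Y ** Gi)" by (rule trace_mul_sym)
    finally have eq: "trace (transpose Y ** Y ** Gi) = trace (transpose V ** V)" by simp
    have "V ** X = Y" unfolding V_def by (simp add: GiG')
    then show ?thesis using eq trace_gram_nonneg[of V] trace_gram_zero[of V] by auto
  qed
  have pos: "D = 0" if "beta_metric \<beta> X D D = 0" for D
  proof -
    define Y1 where "Y1 = (mat 1 - Q) ** D"
    define Y2 where "Y2 = Q ** D"
    have W: "mat 1 - (1 - \<beta>) *\<^sub>R Q = transpose (mat 1 - Q) ** (mat 1 - Q) + \<beta> *\<^sub>R (transpose Q ** Q)"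
      by (simp add: tIQ IQQ tQ QQ algebra_simps)
    have "beta_metric \<beta> X D D = trace (transpose D ** (transpose (mat 1 - Q) ** (mat 1 - Q)) ** D ** Gi)
        + \<beta> * trace (transpose D ** (transpose Q ** Q) ** D ** Gi)"
      unfolding bmE W by (simp add: matrix_add_ldistrib mm_radd mm_sl mm_sr trace_add trace_scaleR')
    also have "\<dots> = trace (transpose Y1 ** Y1 ** Gi) + \<beta> * trace (transpose Y2 ** Y2 ** Gi)"
      unfolding Y1_def Y2_def by (simp add: matrix_transpose_mul matrix_mul_assoc)
    finally have s: "trace (transpose Y1 ** Y1 ** Gi) + \<beta> * trace (transpose Y2 ** Y2 ** Gi) = 0"
      using that by simp
    have n1: "trace (transpose Y1 ** Y1 ** Gi) \<ge> 0" using key by blast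
    have n2: "\<beta> * trace (transpose Y2 ** Y2 ** Gi) \<ge> 0" using key[of Y2] assms(2) by simp
    have "trace (transpose Y1 ** Y1 ** Gi) = 0" using s n1 n2 by linarith
    then have y1: "Y1 = 0" using key by blast
    have "\<beta> * trace (transpose Y2 ** Y2 ** Gi) = 0" using s n1 n2 by linarith
    then have "trace (transpose Y2 ** Y2 ** Gi) = 0" using assms(2) by simp
    then have y2: "Y2 = 0" using key by blast
    have "D = Y1 + Y2" unfolding Y1_def Y2_def by (simp add: mm_rdiff)
    then show ?thesis using y1 y2 by simp
  qed
  have part2: "P Z = proj_formula X Z"
    if hP: "\<forall>Z. P Z \<in> tangent_St X \<and> (\<forall>\<xi>\<in>tangent_St X. beta_metric \<beta> X \<xi> (Z - P Z) = 0)"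
    for P Z
  proof -
    define D where "D = P Z - proj_formula X Z"
    have tD: "D \<in> tangent_St X" unfolding D_def using hP part1 tanD by blast
    have "D = (Z - proj_formula X Z) - (Z - P Z)" unfolding D_def by simp
    then have "beta_metric \<beta> X D D = beta_metric \<beta> X D (Z - proj_formula X Z) - beta_metric \<beta> X D (Z - P Z)"
      using bm_diff by metis
    also have "\<dots> = 0" using hP part1 tD by simp
    finally have "D = 0" using pos by blast
    then show ?thesis unfolding D_def by simp
  qed
  show ?thesis using part1 part2 by blast
qed

end
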